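(* Let $n\ge2$ and let $a_1,\dots,a_{n-1}\in\mathbb C$ be fixed. For $a\in\mathbb C$ set $h_a(z)=z^n+a_{n-1}z^{n-1}+a^n$ and $f_a(z)=z^n+a_{n-1}z^{n-1}+\cdots+a_1z+a^n$. Then $$\lim_{|a|\to+\infty}d_F\bigl(Z(h_a),Z(f_a)\bigr)=0.$$
   Context: $Z(f)$ denotes the roots of $f$ counted with multiplicity. For multisets $A=\{u_1,\dots,u_m\}$, $B=\{v_1,\dots,v_m\}$ in $\mathbb C$, $d_F(A,B)=\min_{\sigma}\max_k|u_k-v_{\sigma(k)}|$ over permutations $\sigma$ of $\{1,\dots,m\}$. *)

theory Defs
  imports "HOL-Analysis.Analysis" "HOL-Computational_Algebra.Computational_Algebra"
begin

abbreviation Zroots :: "complex poly \<Rightarrow> complex multiset" where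
  "Zroots f \<equiv> proots f"

text \<open>Matching distance between two multisets of the same size m:
  minimum over all pairings (equivalently, orderings xs, ys of the multisets,
  i.e. permutations) of the maximal distance of paired points.\<close>
definition dF :: "complex multiset \<Rightarrow> complex multiset \<Rightarrow> real" where
  "dF A B = Min {Max ((\<lambda>k. cmod (xs ! k - ys ! k)) ` {..<size A}) | xs ys.
                   mset xs = A \<and> mset ys = B}"

end

theory Submission
  imports Defs
begin


lemma roots_list:
  fixes p :: "complex poly"
  assumes "degree p = n" "lead_coeff p = 1"
  obtains xs where "length xs = n" "mset xs = proots p" "\<And>z. poly p z = (\<Prod>i<n. z - xs!i)"
proof -
  obtain xs where xs: "mset xs = proots p" using ex_mset by blast
  have len: "length xs = n" using xs assms size_proots_complex by (metis size_mset)
  have "poly p z = (\<Prod>i<n. z - xs!i)" for z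
  proof -
    have "poly p z = poly (smult (lead_coeff p) (\<Prod>x\<in>#proots p. [:-x, 1:])) z"
      using complex_poly_decompose_multiset by metis
    also have "\<dots> = (\<Prod>x\<in>#proots p. z - x)"
      using assms by (simp add: poly_prod_mset multiset.map_comp o_def)
    also have "\<dots> = (\<Prod>x\<leftarrow>xs. z - x)"
      by (subst prod_mset_prod_list [symmetric]) (simp add: xs[symmetric])
    also have "\<dots> = (\<Prod>i<n. z - xs!i)"
      by (subst prod.list_conv_set_nth) (auto simp: atLeast0LessThan len)
    finally show ?thesis .
  qed
  then show ?thesis using that len xs by blast
qed



lemma sum_ones:
  fixes c :: "nat \<Rightarrow> nat"
  assumes "(\<Sum>i<n. c i) = n" "\<forall>i<n. 1 \<le> c i"
  shows "\<forall>i<n. c i = 1"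
proof (intro allI impI)
  fix j assume j: "j < n"
  have "(\<Sum>i<n. c i) = c j + (\<Sum>i\<in>{..<n}-{j}. c i)"
    using j by (subst sum.remove[of _ j]) auto
  moreover have "(\<Sum>i\<in>{..<n}-{j}. c i) \<ge> (\<Sum>i\<in>{..<n}-{j}. 1)"
    using assms(2) by (intro sum_mono) auto
  moreover have "(\<Sum>i\<in>{..<n}-{j}. (1::nat)) = n - 1" using j by simp
  moreover have "1 \<le> c j" using assms(2) j by auto
  ultimately show "c j = 1" using assms(1) j by linarith
qed

lemma match_lemma:
  fixes xs qs :: "complex list" and \<sigma> \<rho> :: real
  assumes len: "length xs = n" "length qs = n" and n: "n > 0"
    and sep: "\<forall>i<n. \<forall>j<n. i \<noteq> j \<longrightarrow> \<sigma> \<le> cmod (xs!i - xs!j)"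
    and rho: "0 < \<rho>" "2*\<rho> \<le> \<sigma>"
    and A: "\<forall>k<n. cmod (\<Prod>i<n. qs!k - xs!i) < \<rho>*(\<sigma>/2)^(n-1)"
    and B: "\<forall>i<n. cmod (\<Prod>k<n. xs!i - qs!k) < \<rho>*(\<sigma>/2)^(n-1)"
  shows "\<exists>ys. length ys = n \<and> mset ys = mset qs \<and> (\<forall>i<n. cmod (xs!i - ys!i) < \<rho>)"
proof -
  have A': "\<exists>i<n. cmod (qs!k - xs!i) < \<rho>" if k: "k < n" for k
  proof (rule ccontr)
    assume "\<not> ?thesis"
    hence ge: "\<forall>i<n. \<rho> \<le> cmod (qs!k - xs!i)" by force
    define s where "s = qs!k"
    define m where "m = Min ((\<lambda>i. cmod (s - xs!i)) ` {..<n})"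
    have "m \<in> (\<lambda>i. cmod (s - xs!i)) ` {..<n}" unfolding m_def using n
      by (intro Min_in) auto
    then obtain j where j: "j < n" "m = cmod (s - xs!j)" by auto
    have jmin: "cmod (s - xs!j) \<le> cmod (s - xs!i)" if "i < n" for i
      using that j unfolding m_def by (metis Min_le finite_imageI finite_lessThan imageI lessThan_iff)
    have far: "\<sigma>/2 \<le> cmod (s - xs!i)" if "i < n" "i \<noteq> j" for i
    proof -
      have "\<sigma> \<le> cmod (xs!i - xs!j)" using sep that j by auto
      also have "xs!i - xs!j = (s - xs!j) - (s - xs!i)" by simp
      also have "cmod \<dots> \<le> cmod (s - xs!j) + cmod (s - xs!i)" by (rule norm_triangle_ineq4)
      finally show ?thesis using jmin[OF that(1)] by linarith
    qed
    have "cmod (\<Prod>i<n. s - xs!i) = (\<Prod>i<n. cmod (s - xs!i))" by (simp add: prod_norm)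
    also have "\<dots> = cmod (s - xs!j) * (\<Prod>i\<in>{..<n}-{j}. cmod (s - xs!i))"
      using j by (subst prod.remove[of _ j]) auto
    also have "\<dots> \<ge> \<rho> * (\<Prod>i\<in>{..<n}-{j}. \<sigma>/2)"
      using ge j rho far unfolding s_def
      by (intro mult_mono prod_mono) auto
    finally have "\<rho> * (\<sigma>/2)^(n-1) \<le> cmod (\<Prod>i<n. s - xs!i)" using j by simp
    thus False using A k unfolding s_def by force
  qed
  define K where "K i = {k. k < n \<and> cmod (qs!k - xs!i) < \<rho>}" for i
  have disj: "K i \<inter> K j = {}" if "i < n" "j < n" "i \<noteq> j" for i j
  proof (rule ccontr)
    assume "K i \<inter> K j \<noteq> {}"
    then obtain k where k: "k \<in> K i" "k \<in> K j" by blast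
    have "cmod (xs!i - xs!j) \<le> cmod (qs!k - xs!j) + cmod (qs!k - xs!i)"
      using norm_triangle_ineq4[of "qs!k - xs!j" "qs!k - xs!i"] by simp
    also have "\<dots> < 2*\<rho>" using k unfolding K_def by auto
    finally show False using sep that rho by force
  qed
  have ne: "K i \<noteq> {}" if i: "i < n" for i
  proof
    assume emp: "K i = {}"
    have far: "\<sigma>/2 \<le> cmod (xs!i - qs!k)" if k: "k < n" for k
    proof -
      obtain i' where i': "i' < n" "cmod (qs!k - xs!i') < \<rho>" using A' k by blast
      have "i' \<noteq> i" using i' emp k unfolding K_def by auto
      hence "\<sigma> \<le> cmod (xs!i - xs!i')" using sep i i' by auto
      also have "xs!i - xs!i' = (xs!i - qs!k) + (qs!k - xs!i')" by simp
      also have "cmod \<dots> \<le> cmod (xs!i - qs!k) + cmod (qs!k - xs!i')" by (rule norm_triangle_ineq)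
      finally show ?thesis using i' rho by linarith
    qed
    have "cmod (\<Prod>k<n. xs!i - qs!k) = (\<Prod>k<n. cmod (xs!i - qs!k))" by (simp add: prod_norm)
    also have "\<dots> \<ge> (\<Prod>k<n. \<sigma>/2)"
      using far rho by (intro prod_mono) auto
    finally have "(\<sigma>/2)^n \<le> cmod (\<Prod>k<n. xs!i - qs!k)" by simp
    moreover have "(\<sigma>/2)^n = (\<sigma>/2) * (\<sigma>/2)^(n-1)" using n
      by (metis Suc_diff_1 power_Suc)
    moreover have "\<rho>*(\<sigma>/2)^(n-1) \<le> (\<sigma>/2) * (\<sigma>/2)^(n-1)"
      using rho by (intro mult_right_mono) auto
    ultimately show False using B i by force
  qed
  have union: "(\<Union>i<n. K i) = {..<n}"
    using A' unfolding K_def by auto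
  have "n = card (\<Union>i<n. K i)" using union by simp
  also have "\<dots> = (\<Sum>i<n. card (K i))"
    apply (rule card_UN_disjoint)
    apply simp
    apply (simp add: K_def)
    using disj by blast
  finally have "\<forall>i<n. card (K i) = 1"
    using ne by (intro sum_ones) (auto simp: K_def Suc_le_eq card_gt_0_iff)
  hence "\<forall>i<n. \<exists>k. K i = {k}" by (meson card_1_singletonE)
  then obtain \<pi> where pi: "\<forall>i<n. K i = {\<pi> i}" by metis
  have pin: "\<pi> i < n" "cmod (qs!\<pi> i - xs!i) < \<rho>" if "i < n" for i
    using pi that unfolding K_def by blast+
  have inj: "inj_on \<pi> {..<n}"
  proof (rule inj_onI)
    fix i j assume "i \<in> {..<n}" "j \<in> {..<n}" "\<pi> i = \<pi> j"
    thus "i = j" using disj pi by fastforce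
  qed
  have img: "\<pi> ` {..<n} = {..<n}"
    using inj pin by (intro endo_inj_surj) auto
  define ys where "ys = map (\<lambda>i. qs ! \<pi> i) [0..<n]"
  have "mset ys = image_mset (nth qs) (image_mset \<pi> (mset_set {..<n}))"
    unfolding ys_def by (simp add: multiset.map_comp o_def atLeast0LessThan[symmetric])
  also have "\<dots> = image_mset (nth qs) (mset_set {..<n})"
    using inj img by (simp add: image_mset_mset_set)
  also have "\<dots> = mset (map (nth qs) [0..<n])" by (simp add: atLeast0LessThan[symmetric])
  also have "\<dots> = mset qs" using len(2) by (metis map_nth)
  finally have "mset ys = mset qs" .
  moreover have "length ys = n" unfolding ys_def by simp
  moreover have "\<forall>i<n. cmod (xs!i - ys!i) < \<rho>"
    using pin unfolding ys_def by (simp add: norm_minus_commute)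
  ultimately show ?thesis by blast
qed


lemma monic_deg:
  fixes r :: "complex poly"
  assumes "degree r < n"
  shows "degree (monom 1 n + r) = n" "lead_coeff (monom 1 n + r) = 1"
proof -
  have d: "degree (monom (1::complex) n) = n" by (simp add: degree_monom_eq)
  show *: "degree (monom 1 n + r) = n" using assms d by (subst degree_add_eq_left) auto
  show "lead_coeff (monom 1 n + r) = 1" using assms by (simp add: * coeff_eq_0)
qed

lemma prod_idx_mset:
  assumes "length xs = n"
  shows "(\<Prod>i<n. g (xs!i)) = prod_mset (image_mset g (mset xs))"
proof -
  have "prod_mset (image_mset g (mset xs)) = (\<Prod>x\<leftarrow>xs. g x)"
    by (subst prod_mset_prod_list [symmetric]) simp
  also have "\<dots> = (\<Prod>i<n. g (xs!i))"
    by (subst prod.list_conv_set_nth) (auto simp: atLeast0LessThan assms)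
  finally show ?thesis by simp
qed

lemma dF_lt:
  assumes "length xs = n" "length ys = n" "n > 0" "\<forall>i<n. cmod (xs!i - ys!i) < \<epsilon>"
  shows "\<bar>dF (mset xs) (mset ys)\<bar> < \<epsilon>"
proof -
  define M where "M = (\<lambda>(u::complex list) (v::complex list). Max ((\<lambda>k. cmod (u ! k - v ! k)) ` {..<n}))"
  define S where "S = {Max ((\<lambda>k. cmod (u ! k - v ! k)) ` {..<size (mset xs)}) | u v.
                   mset u = mset xs \<and> mset v = mset ys}"
  have dF: "dF (mset xs) (mset ys) = Min S" unfolding dF_def S_def ..
  have fin1: "finite {u::complex list. mset u = A}" for A
  proof (rule finite_subset)
    show "{u::complex list. mset u = A} \<subseteq> {u. set u \<subseteq> set_mset A \<and> length u = size A}" by auto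
    show "finite {u. set u \<subseteq> set_mset A \<and> length u = size A}"
      by (rule finite_lists_length_eq) simp
  qed
  have SS: "S = (\<lambda>(u,v). M u v) ` ({u. mset u = mset xs} \<times> {v. mset v = mset ys})"
    unfolding S_def M_def using assms(1) by auto
  have finS: "finite S" unfolding SS using fin1 by auto
  have m0: "M xs ys \<in> S" unfolding SS by auto
  have m0lt: "M xs ys < \<epsilon>" unfolding M_def using assms by (subst Max_less_iff) auto
  have "Min S \<le> M xs ys" using finS m0 by (rule Min_le)
  moreover have "0 \<le> Min S"
  proof -
    have "Min S \<in> S" using finS m0 by (intro Min_in) auto
    then obtain u v where "Min S = M u v" unfolding SS by auto
    moreover have "0 \<le> M u v" unfolding M_def using assms(3)
      by (subst Max_ge_iff) auto
    ultimately show ?thesis by simp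
  qed
  ultimately show ?thesis using dF m0lt by auto
qed

lemma root_bound:
  fixes z w A :: complex and t S :: real
  assumes n: "n \<ge> 2" and t: "0 < t" and z: "2*t \<le> cmod z" "2*S \<le> cmod z"
    and w: "cmod w \<le> S * cmod z ^ (n-1)" and A: "cmod A \<le> t^n"
  shows "z^n + w + A \<noteq> 0"
proof
  assume eq: "z^n + w + A = 0"
  have zpos: "0 < cmod z" using t z by linarith
  have zn: "cmod z ^ n = cmod z * cmod z ^ (n-1)" using n
    by (metis One_nat_def Suc_diff_le diff_Suc_1 le_trans one_le_numeral power_Suc)
  have "cmod w \<le> cmod z ^ n / 2"
  proof -
    have "S * cmod z ^ (n-1) \<le> (cmod z / 2) * cmod z ^ (n-1)"
      using z by (intro mult_right_mono) auto
    thus ?thesis using w zn by simp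
  qed
  moreover have "cmod A \<le> cmod z ^ n / 4"
  proof -
    have "t^n \<le> (cmod z/2)^n" using t z by (intro power_mono) auto
    also have "\<dots> = cmod z^n / 2^n" by (simp add: power_divide)
    also have "\<dots> \<le> cmod z^n / 4"
    proof -
      have "(2::real)^2 \<le> 2^n" using n by (intro power_increasing) auto
      hence "(4::real) \<le> 2^n" by simp
      thus ?thesis using zpos by (intro divide_left_mono) auto
    qed
    finally show ?thesis using A by linarith
  qed
  moreover have "cmod (z^n) \<le> cmod w + cmod A"
  proof -
    have "z^n + (w + A) = 0" using eq by (simp add: add.assoc)
    hence "z^n = -(w + A)" by (simp only: eq_neg_iff_add_eq_0)
    hence "cmod (z^n) = cmod (w + A)" by (simp only: norm_minus_cancel)
    thus ?thesis using norm_triangle_ineq by metis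
  qed
  moreover have "0 < cmod z ^ n" using zpos by simp
  ultimately show False by (simp add: norm_power)
qed


theorem corollary4p7:
  fixes n :: nat and c :: "nat \<Rightarrow> complex"
  assumes "n \<ge> 2"
  defines "h \<equiv> \<lambda>a::complex. monom 1 n + monom (c (n - 1)) (n - 1) + [:a ^ n:]"
      and "f \<equiv> \<lambda>a::complex. monom 1 n + (\<Sum>k = 1..n - 1. monom (c k) k) + [:a ^ n:]"
  shows "((\<lambda>a. dF (Zroots (h a)) (Zroots (f a))) \<longlongrightarrow> 0) at_infinity"
proof -
  have n2: "n \<ge> 2" by fact
  hence n0: "n > 0" by simp
  define b where "b = c (n-1)"
  define S where "S = (\<Sum>k=1..n-1. cmod (c k))"
  have S0: "0 \<le> S" by (simp add: S_def sum_nonneg)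
  have bS: "cmod b \<le> S" unfolding S_def b_def
    by (rule member_le_sum) (use n2 in auto)
  define D where "D z = (\<Sum>k\<in>{1..<n-1}. c k * z^k)" for z :: complex
  have polyh: "poly (h a) z = z^n + b*z^(n-1) + a^n" for a z
    by (simp add: h_def poly_monom b_def)
  have polyf0: "poly (f a) z = z^n + (\<Sum>k=1..n-1. c k * z^k) + a^n" for a z
    by (simp add: f_def poly_monom poly_sum)
  have ins: "{1..n-1} = insert (n-1) {1..<n-1}" using n2 by auto
  have polyf: "poly (f a) z = poly (h a) z + D z" for a z
    unfolding polyf0 polyh D_def b_def ins by (simp add: algebra_simps)
  have Dbound: "cmod (D z) \<le> S*(2*t)^(n-2)" if z: "cmod z \<le> 2*t" and t: "1 \<le> t" for z t
  proof -
    have "cmod (D z) \<le> (\<Sum>k\<in>{1..<n-1}. cmod (c k) * cmod z^k)"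
      unfolding D_def by (rule order_trans[OF norm_sum]) (simp add: norm_mult norm_power)
    also have "\<dots> \<le> (\<Sum>k\<in>{1..<n-1}. cmod (c k) * (2*t)^(n-2))"
    proof (intro sum_mono mult_left_mono)
      fix k assume k: "k \<in> {1..<n-1}"
      have "cmod z^k \<le> (2*t)^k" using z by (intro power_mono) auto
      also have "\<dots> \<le> (2*t)^(n-2)" using k t by (intro power_increasing) auto
      finally show "cmod z^k \<le> (2*t)^(n-2)" .
    qed auto
    also have "\<dots> = (\<Sum>k\<in>{1..<n-1}. cmod (c k)) * (2*t)^(n-2)" by (simp add: sum_distrib_right)
    also have "\<dots> \<le> S * (2*t)^(n-2)" unfolding S_def using t
      by (intro mult_right_mono sum_mono2) auto
    finally show ?thesis .
  qed
  have hdeg: "degree (h a) = n" "lead_coeff (h a) = 1" for a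
  proof -
    have "degree (monom b (n-1) + [:a^n:]) \<le> n-1"
      by (intro degree_add_le degree_monom_le) auto
    hence lt: "degree (monom b (n-1) + [:a^n:]) < n" using n2 by linarith
    have eq: "h a = monom 1 n + (monom b (n-1) + [:a^n:])" by (simp add: h_def b_def add.assoc)
    show "degree (h a) = n" "lead_coeff (h a) = 1" unfolding eq using monic_deg[OF lt] by auto
  qed
  have fdeg: "degree (f a) = n" "lead_coeff (f a) = 1" for a
  proof -
    have "degree ((\<Sum>k = 1..n - 1. monom (c k) k) + [:a^n:]) \<le> n-1"
      by (intro degree_add_le degree_sum_le) (auto intro: order_trans[OF degree_monom_le])
    hence lt: "degree ((\<Sum>k = 1..n - 1. monom (c k) k) + [:a^n:]) < n" using n2 by linarith
    have eq: "f a = monom 1 n + ((\<Sum>k = 1..n - 1. monom (c k) k) + [:a^n:])" by (simp add: f_def add.assoc)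
    show "degree (f a) = n" "lead_coeff (f a) = 1" unfolding eq using monic_deg[OF lt] by auto
  qed
  define g1 where "g1 = monom (1::complex) n + [:1:]"
  have g1deg: "degree g1 = n" "lead_coeff g1 = 1" unfolding g1_def using monic_deg[of "[:1:]" n] n0 by auto
  obtain ws where ws: "length ws = n" "mset ws = proots g1" "\<And>z. poly g1 z = (\<Prod>i<n. z - ws!i)"
    using roots_list[OF g1deg] by metis
  have g1e: "poly g1 w = w^n + 1" for w by (simp add: g1_def poly_monom)
  have wsroot: "ws!i ^ n = -1" if "i < n" for i
  proof -
    have "poly g1 (ws!i) = 0" unfolding ws(3) using that by (intro prod_zero[of "{..<n}"]) auto
    thus ?thesis unfolding g1e by (simp add: add_eq_0_iff2)
  qed
  have wsnorm: "cmod (ws!i) = 1" if "i < n" for i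
  proof -
    have "cmod (ws!i) ^ n = 1 ^ n" using wsroot[OF that] by (metis norm_power norm_minus_cancel norm_one power_one)
    thus ?thesis using n0 by (subst (asm) power_eq_iff_eq_base) auto
  qed
  have rsq: "rsquarefree g1"
  proof (subst rsquarefree_roots, intro allI notI)
    fix w assume w: "poly g1 w = 0 \<and> poly (pderiv g1) w = 0"
    have "pderiv g1 = monom (of_nat n) (n-1)" by (simp add: g1_def pderiv_add pderiv_monom)
    hence "of_nat n * w^(n-1) = 0" using w by (simp add: poly_monom)
    hence "w = 0" using n0 by simp
    thus False using w n0 by (simp add: g1e zero_power)
  qed
  have g1nz: "g1 \<noteq> 0" using rsq by (simp add: rsquarefree_def)
  have dws: "distinct ws"
  proof -
    have le1: "count (mset ws) x \<le> 1" for x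
      using rsq g1nz unfolding ws(2) rsquarefree_def by (metis count_proots le_refl zero_le_one)
    show ?thesis unfolding distinct_count_atmost_1
    proof
      fix x show "count (mset ws) x = (if x \<in> set ws then 1 else 0)"
        using le1[of x] by (auto simp: count_eq_zero_iff[symmetric] intro: antisym)
    qed
  qed
  define PS where "PS = (\<lambda>(i,j). cmod (ws!i - ws!j)) ` {(i,j). i<n \<and> j<n \<and> i\<noteq>j}"
  define \<mu> where "\<mu> = Min PS"
  have finPS: "finite PS" unfolding PS_def
    by (rule finite_imageI, rule finite_subset[of _ "{..<n} \<times> {..<n}"]) auto
  have PSne: "(cmod (ws!0 - ws!1)) \<in> PS" unfolding PS_def using n2 by force
  have \<mu>le: "\<mu> \<le> cmod (ws!i - ws!j)" if "i < n" "j < n" "i \<noteq> j" for i j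
    unfolding \<mu>_def using finPS that by (intro Min_le) (auto simp: PS_def)
  have \<mu>pos: "\<mu> > 0"
  proof -
    have "\<mu> \<in> PS" unfolding \<mu>_def using finPS PSne by (intro Min_in) auto
    then obtain i j where "i<n" "j<n" "i\<noteq>j" "\<mu> = cmod (ws!i - ws!j)" unfolding PS_def by auto
    thus ?thesis using dws ws(1) by (simp add: nth_eq_iff_index_eq)
  qed
  define R where "R = cmod b * 2^(n-1) / (\<mu>/2)^(n-1) + 1"
  have mu2pos: "(\<mu>/2)^(n-1) > 0" using \<mu>pos by simp
  have "0 \<le> cmod b * 2^(n-1) / (\<mu>/2)^(n-1)" using mu2pos by (intro divide_nonneg_pos) auto
  hence Rpos: "R > 0" unfolding R_def by linarith
  have key1: "cmod b * 2^(n-1) < R * (\<mu>/2)^(n-1)"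
  proof -
    have "R * (\<mu>/2)^(n-1) = cmod b * 2^(n-1) + (\<mu>/2)^(n-1)"
    proof -
      have gen: "(x / Q + 1) * Q = x + Q" if "Q > 0" for x Q :: real using that by (simp add: field_simps)
      show ?thesis unfolding R_def by (rule gen[OF mu2pos])
    qed
    thus ?thesis using mu2pos by linarith
  qed
  have step1bound: "cmod b * (2*t)^(n-1) < R*(\<mu>*t/2)^(n-1)" if "t > 0" for t
  proof -
    have tp: "t^(n-1) > 0" using that by simp
    have "cmod b * (2*t)^(n-1) = (cmod b * 2^(n-1)) * t^(n-1)" by (simp add: power_mult_distrib)
    also have "\<dots> < (R * (\<mu>/2)^(n-1)) * t^(n-1)" using key1 tp by (intro mult_strict_right_mono)
    also have "\<dots> = R*(\<mu>*t/2)^(n-1)" by (simp add: power_mult_distrib power_divide)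
    finally show ?thesis .
  qed
  show ?thesis
  proof (subst tendsto_iff, intro allI impI)
    fix \<epsilon> :: real assume \<epsilon>: "\<epsilon> > 0"
    define K where "K = S*2^(n-2)/(\<epsilon>*(\<mu>/4)^(n-1))"
    have K0: "0 \<le> K" unfolding K_def using S0 \<epsilon> \<mu>pos by simp
    define B where "B = 1 + S + 4*R/\<mu> + 4*\<epsilon>/\<mu> + K + 1"
    show "\<forall>\<^sub>F a in at_infinity. dist (dF (Zroots (h a)) (Zroots (f a))) 0 < \<epsilon>"
      unfolding eventually_at_infinity
    proof (intro exI allI impI)
      fix a :: complex assume aB: "B \<le> norm a"
      define t where "t = cmod a"
      have q1: "0 \<le> 4*R/\<mu>" "0 \<le> 4*\<epsilon>/\<mu>" using Rpos \<mu>pos \<epsilon> by auto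
      have t1: "1 + S \<le> t" "4*R/\<mu> \<le> t" "4*\<epsilon>/\<mu> \<le> t" "K < t"
        using aB q1 S0 K0 unfolding B_def t_def by linarith+
      have tpos: "t > 0" "1 \<le> t" using t1 S0 by auto
      have a0: "a \<noteq> 0" using tpos unfolding t_def by auto
      have R4: "4*R \<le> \<mu>*t" using t1(2) \<mu>pos by (simp add: pos_divide_le_eq mult.commute)
      have e4: "4*\<epsilon> \<le> \<mu>*t" using t1(3) \<mu>pos by (simp add: pos_divide_le_eq mult.commute)
      have Kt: "S*2^(n-2) < \<epsilon>*(\<mu>/4)^(n-1) * t"
        using t1(4) \<epsilon> \<mu>pos unfolding K_def by (simp add: pos_divide_less_eq mult.commute)
      obtain hs where hs: "length hs = n" "mset hs = proots (h a)" "\<And>z. poly (h a) z = (\<Prod>i<n. z - hs!i)"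
        using roots_list[OF hdeg] by metis
      obtain fs where fs: "length fs = n" "mset fs = proots (f a)" "\<And>z. poly (f a) z = (\<Prod>i<n. z - fs!i)"
        using roots_list[OF fdeg] by metis
      have hroot: "poly (h a) (hs!k) = 0" if "k < n" for k
        unfolding hs(3) using that by (intro prod_zero[of "{..<n}"]) auto
      have froot: "poly (f a) (fs!k) = 0" if "k < n" for k
        unfolding fs(3) using that by (intro prod_zero[of "{..<n}"]) auto
      have hsb: "cmod (hs!k) < 2*t" if "k < n" for k
      proof (rule ccontr)
        define z where "z = hs!k"
        assume "\<not> ?thesis"
        hence z2: "2*t \<le> cmod z" unfolding z_def by simp
        have "z^n + b*z^(n-1) + a^n \<noteq> 0"
        proof (rule root_bound[OF n2 tpos(1) z2])
          show "2*S \<le> cmod z" using z2 t1 by linarith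
          show "cmod (b*z^(n-1)) \<le> S * cmod z^(n-1)" using bS by (simp add: norm_mult norm_power mult_right_mono)
          show "cmod (a^n) \<le> t^n" by (simp add: t_def norm_power)
        qed
        thus False using hroot[OF that] polyh unfolding z_def by simp
      qed
      have fsb: "cmod (fs!k) < 2*t" if "k < n" for k
      proof (rule ccontr)
        define z where "z = fs!k"
        assume "\<not> ?thesis"
        hence z2: "2*t \<le> cmod z" unfolding z_def by simp
        have z1: "1 \<le> cmod z" using z2 tpos by linarith
        have "z^n + (\<Sum>k=1..n-1. c k * z^k) + a^n \<noteq> 0"
        proof (rule root_bound[OF n2 tpos(1) z2])
          show "2*S \<le> cmod z" using z2 t1 by linarith
          have "cmod (\<Sum>k=1..n-1. c k * z^k) \<le> (\<Sum>k=1..n-1. cmod (c k) * cmod z^k)"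
            by (rule order_trans[OF norm_sum]) (simp add: norm_mult norm_power)
          also have "\<dots> \<le> (\<Sum>k=1..n-1. cmod (c k) * cmod z^(n-1))"
            using z1 by (intro sum_mono mult_left_mono power_increasing) auto
          also have "\<dots> = S * cmod z^(n-1)" unfolding S_def by (simp add: sum_distrib_right)
          finally show "cmod (\<Sum>k=1..n-1. c k * z^k) \<le> S * cmod z^(n-1)" .
          show "cmod (a^n) \<le> t^n" by (simp add: t_def norm_power)
        qed
        thus False using froot[OF that] polyf0 unfolding z_def by simp
      qed
      define xs1 where "xs1 = map (\<lambda>w. a*w) ws"
      have xs1n: "xs1!i = a * ws!i" if "i < n" for i unfolding xs1_def using that ws(1) by simp
      have prodid: "(\<Prod>i<n. z - xs1!i) = z^n + a^n" for z
      proof -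
        have "(\<Prod>i<n. z - xs1!i) = (\<Prod>i<n. a * (z/a - ws!i))"
          using a0 by (intro prod.cong) (auto simp: xs1n field_simps)
        also have "\<dots> = a^n * (\<Prod>i<n. z/a - ws!i)" by (simp add: prod.distrib)
        also have "\<dots> = a^n * ((z/a)^n + 1)" using ws(3) g1e by metis
        also have "\<dots> = z^n + a^n" using a0 by (simp add: field_simps power_divide)
        finally show ?thesis .
      qed
      have "\<exists>ys. length ys = n \<and> mset ys = mset hs \<and> (\<forall>i<n. cmod (xs1!i - ys!i) < R)"
      proof (rule match_lemma[where \<sigma> = "\<mu>*t"])
        show "length xs1 = n" unfolding xs1_def using ws(1) by simp
        show "length hs = n" "0 < n" "0 < R" using hs n0 Rpos by auto
        show "2*R \<le> \<mu>*t" using R4 Rpos by linarith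
        show "\<forall>i<n. \<forall>j<n. i \<noteq> j \<longrightarrow> \<mu>*t \<le> cmod (xs1!i - xs1!j)"
        proof (intro allI impI)
          fix i j assume ij: "i < n" "j < n" "i \<noteq> j"
          have "xs1!i - xs1!j = a * (ws!i - ws!j)" using ij by (simp add: xs1n algebra_simps)
          hence "cmod (xs1!i - xs1!j) = t * cmod (ws!i - ws!j)" by (simp add: norm_mult t_def)
          thus "\<mu>*t \<le> cmod (xs1!i - xs1!j)" using \<mu>le[OF ij] tpos by (simp add: mult.commute)
        qed
        show "\<forall>k<n. cmod (\<Prod>i<n. hs!k - xs1!i) < R*(\<mu>*t/2)^(n-1)"
        proof (intro allI impI)
          fix k assume k: "k < n"
          have e: "hs!k^n + b*hs!k^(n-1) + a^n = 0" using hroot[OF k] polyh by simp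
          have "hs!k^n + a^n = -(b*hs!k^(n-1))" unfolding eq_neg_iff_add_eq_0 using e by (simp add: add_ac)
          hence "(\<Prod>i<n. hs!k - xs1!i) = -(b * hs!k^(n-1))" by (simp only: prodid)
          hence "cmod (\<Prod>i<n. hs!k - xs1!i) = cmod b * cmod (hs!k)^(n-1)" by (simp add: norm_mult norm_power)
          also have "\<dots> \<le> cmod b * (2*t)^(n-1)"
            using hsb[OF k] by (intro mult_left_mono power_mono) auto
          also have "\<dots> < R*(\<mu>*t/2)^(n-1)" using step1bound tpos by blast
          finally show "cmod (\<Prod>i<n. hs!k - xs1!i) < R*(\<mu>*t/2)^(n-1)" .
        qed
        show "\<forall>i<n. cmod (\<Prod>k<n. xs1!i - hs!k) < R*(\<mu>*t/2)^(n-1)"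
        proof (intro allI impI)
          fix i assume i: "i < n"
          have "(a*ws!i)^n = - (a^n)" using wsroot[OF i] by (simp add: power_mult_distrib)
          hence "(\<Prod>k<n. xs1!i - hs!k) = b * (a*ws!i)^(n-1)"
            using xs1n[OF i] hs(3)[of "xs1!i"] polyh[of a "xs1!i"] by simp
          hence "cmod (\<Prod>k<n. xs1!i - hs!k) = cmod b * t^(n-1)"
            using wsnorm[OF i] by (simp add: norm_mult norm_power t_def)
          also have "\<dots> \<le> cmod b * (2*t)^(n-1)"
            using tpos by (intro mult_left_mono power_mono) auto
          also have "\<dots> < R*(\<mu>*t/2)^(n-1)" using step1bound tpos by blast
          finally show "cmod (\<Prod>k<n. xs1!i - hs!k) < R*(\<mu>*t/2)^(n-1)" .
        qed
      qed
      then obtain ys where ys: "length ys = n" "mset ys = mset hs" "\<forall>i<n. cmod (xs1!i - ys!i) < R"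
        by blast
      have polyh_ys: "poly (h a) z = (\<Prod>i<n. z - ys!i)" for z
        using hs(3)[of z] prod_idx_mset[OF ys(1), of "\<lambda>x. z - x"] prod_idx_mset[OF hs(1), of "\<lambda>x. z - x"] ys(2)
        by simp
      have ysroot: "poly (h a) (ys!i) = 0" if "i < n" for i
        unfolding polyh_ys using that by (intro prod_zero[of "{..<n}"]) auto
      have ysb: "cmod (ys!i) < 2*t" if "i < n" for i
      proof -
        have "ys!i \<in> set hs" using mset_eq_setD[OF ys(2)] that ys(1) by (metis nth_mem)
        then obtain k where "k < n" "ys!i = hs!k" using hs(1) by (metis in_set_conv_nth)
        thus ?thesis using hsb by simp
      qed
      have step2bound: "S*(2*t)^(n-2) < \<epsilon>*((\<mu>*t - 2*R)/2)^(n-1)"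
      proof -
        have nn: "n - 1 = Suc (n-2)" using n2 by simp
        have "S*(2*t)^(n-2) = (S*2^(n-2)) * t^(n-2)" by (simp add: power_mult_distrib)
        also have "\<dots> < (\<epsilon>*(\<mu>/4)^(n-1) * t) * t^(n-2)"
          using Kt tpos by (intro mult_strict_right_mono) auto
        also have "\<dots> = \<epsilon>*(\<mu>*t/4)^(n-1)"
          unfolding nn by (simp add: power_mult_distrib power_divide)
        also have "\<dots> \<le> \<epsilon>*((\<mu>*t - 2*R)/2)^(n-1)"
          using R4 \<mu>pos tpos \<epsilon> by (intro mult_left_mono power_mono) auto
        finally show ?thesis .
      qed
      have "\<exists>zs. length zs = n \<and> mset zs = mset fs \<and> (\<forall>i<n. cmod (ys!i - zs!i) < \<epsilon>)"
      proof (rule match_lemma[where \<sigma> = "\<mu>*t - 2*R"])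
        show "length ys = n" "length fs = n" "0 < n" "0 < \<epsilon>" using ys fs n0 \<epsilon> by auto
        show "2*\<epsilon> \<le> \<mu>*t - 2*R" using R4 e4 by linarith
        show "\<forall>i<n. \<forall>j<n. i \<noteq> j \<longrightarrow> \<mu>*t - 2*R \<le> cmod (ys!i - ys!j)"
        proof (intro allI impI)
          fix i j assume ij: "i < n" "j < n" "i \<noteq> j"
          have "xs1!i - xs1!j = a * (ws!i - ws!j)" using ij by (simp add: xs1n algebra_simps)
          hence "cmod (xs1!i - xs1!j) = t * cmod (ws!i - ws!j)" by (simp add: norm_mult t_def)
          hence m: "\<mu>*t \<le> cmod (xs1!i - xs1!j)" using \<mu>le[OF ij] tpos by (simp add: mult.commute)
          have eq: "xs1!i - xs1!j = ((xs1!i - ys!i) + (ys!i - ys!j)) - (xs1!j - ys!j)" by simp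
          have t1: "cmod (xs1!i - xs1!j) \<le> cmod ((xs1!i - ys!i) + (ys!i - ys!j)) + cmod (xs1!j - ys!j)"
            unfolding eq by (rule norm_triangle_ineq4)
          have t2: "cmod ((xs1!i - ys!i) + (ys!i - ys!j)) \<le> cmod (xs1!i - ys!i) + cmod (ys!i - ys!j)"
            by (rule norm_triangle_ineq)
          from t1 t2 have "cmod (xs1!i - xs1!j) \<le> cmod (xs1!i - ys!i) + cmod (ys!i - ys!j) + cmod (xs1!j - ys!j)"
            by linarith
          moreover have "cmod (xs1!i - ys!i) < R" "cmod (xs1!j - ys!j) < R" using ys(3) ij by auto
          ultimately show "\<mu>*t - 2*R \<le> cmod (ys!i - ys!j)" using m by linarith
        qed
        show "\<forall>k<n. cmod (\<Prod>i<n. fs!k - ys!i) < \<epsilon>*((\<mu>*t - 2*R)/2)^(n-1)"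
        proof (intro allI impI)
          fix k assume k: "k < n"
          have "(\<Prod>i<n. fs!k - ys!i) = - D (fs!k)"
            using froot[OF k] polyf[of a "fs!k"] polyh_ys[of "fs!k"] by (simp add: add_eq_0_iff2)
          hence "cmod (\<Prod>i<n. fs!k - ys!i) = cmod (D (fs!k))" by simp
          also have "\<dots> \<le> S*(2*t)^(n-2)" using fsb[OF k] tpos by (intro Dbound) auto
          finally show "cmod (\<Prod>i<n. fs!k - ys!i) < \<epsilon>*((\<mu>*t - 2*R)/2)^(n-1)" using step2bound by linarith
        qed
        show "\<forall>i<n. cmod (\<Prod>k<n. ys!i - fs!k) < \<epsilon>*((\<mu>*t - 2*R)/2)^(n-1)"
        proof (intro allI impI)
          fix i assume i: "i < n"
          have "(\<Prod>k<n. ys!i - fs!k) = D (ys!i)"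
            using ysroot[OF i] polyf[of a "ys!i"] fs(3)[of "ys!i"] by simp
          hence "cmod (\<Prod>k<n. ys!i - fs!k) = cmod (D (ys!i))" by simp
          also have "\<dots> \<le> S*(2*t)^(n-2)" using ysb[OF i] tpos by (intro Dbound) auto
          finally show "cmod (\<Prod>k<n. ys!i - fs!k) < \<epsilon>*((\<mu>*t - 2*R)/2)^(n-1)" using step2bound by linarith
        qed
      qed
      then obtain zs where zs: "length zs = n" "mset zs = mset fs" "\<forall>i<n. cmod (ys!i - zs!i) < \<epsilon>"
        by blast
      have "\<bar>dF (mset ys) (mset zs)\<bar> < \<epsilon>" using dF_lt[OF ys(1) zs(1) n0 zs(3)] .
      moreover have "mset ys = Zroots (h a)" "mset zs = Zroots (f a)" using ys(2) hs(2) zs(2) fs(2) by auto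
      ultimately show "dist (dF (Zroots (h a)) (Zroots (f a))) 0 < \<epsilon>" by simp
    qed
  qed
qed

end
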